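(* Fix $N\ge 2$, $\tau>0$, $\lambda>0$, $\mu\ge 0$ and $c\in\mathbb{R}$. Let $x_i,y_i$ ($i=1,\dots,N$) be the unit-norm embeddings by the labeled-data encoder $f_\theta$ of $N$ positive pairs, with $s^{\theta}_{ij}=\langle x_i,y_j\rangle$; let $z_i$ ($i=1,\dots,N$) be the unit-norm embeddings by the full-data encoder $g_\psi$ of a batch of $N$ molecules from the full dataset, with $s^{\psi}_{ij}=\langle z_i,z_j\rangle$; and let $u_i$ be the unit-norm embeddings of the same $N$ full-dataset molecules by $f_\theta$ with gradients detached, regarded as fixed vectors. Define the soft-label matrix $$\hat\Gamma=\arg\min_{\Gamma\in U(\mathbf 1_N,\mathbf 1_N)}\Big(\langle C^{fix},\Gamma\rangle+\frac{\lambda}{2}\|\Gamma\|_F^2\Big),\qquad C^{fix}_{ij}=c-\langle u_i,u_j\rangle,$$ and the losses $$\mathcal{L}_{sup}(\theta)=-\sum_{i=1}^N\log\frac{\exp(s^{\theta}_{ii}/\tau)}{\sum_{j=1}^N\exp(s^{\theta}_{ij}/\tau)},\qquad \mathcal{L}_{soft}(\psi)=-\sum_{i,j=1}^N\hat\Gamma_{ij}\log\frac{\exp(s^{\psi}_{ij}/\tau)}{\sum_{k=1}^N\exp(s^{\psi}_{ik}/\tau)},$$ $$\mathcal{L}_{reg}(\psi)=-\frac1N\sum_{i=1}^N\log\rho_i,\qquad \rho_i=\min_{j\ne i}\|z_i-z_j\|,$$ and $\mathcal{L}_{total}=\mathcal{L}_{sup}+\mathcal{L}_{soft}+\mu\mathcal{L}_{reg}$.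 Consider the IOT problem $$\min_{\theta,\psi}\ J(\theta,\psi)=KL(\Gamma^{g}\|\Gamma^{\theta})+KL(\hat\Gamma\|\Gamma^{\psi})+\mu\,\mathcal{L}_{reg}(\psi),$$ with $\Gamma^{g}_{ij}=\delta_{ij}/N$, $\Gamma^{\theta}=\arg\min_{\Gamma\in U(\frac1N\mathbf 1)}(\langle C^{\theta},\Gamma\rangle-\tau H(\Gamma))$, $\Gamma^{\psi}=\arg\min_{\Gamma\in U(\frac1N\mathbf 1)}(\langle C^{\psi},\Gamma\rangle-\tau H(\Gamma))$, $C^{\theta}_{ij}=c-s^{\theta}_{ij}$, $C^{\psi}_{ij}=c-s^{\psi}_{ij}$, and with $\hat\Gamma$ treated as fixed (independent of $\theta,\psi$). Then $\hat\Gamma$, $\Gamma^\theta$, $\Gamma^\psi$ are well defined (unique), and for all $\theta,\psi$, $$J(\theta,\psi)=\frac1N\mathcal{L}_{sup}(\theta)+\mathcal{L}_{soft}(\psi)+\mu\,\mathcal{L}_{reg}(\psi)+K,\qquad K=\sum_{i,j}\hat\Gamma_{ij}\log\hat\Gamma_{ij}+N\log N-N+1 .$$ Consequently $(\theta^*,\psi^* )$ minimizes $J$ if and only if $\theta^*$ minimizes $\mathcal{L}_{sup}$ and $\psi^*$ minimizes $\mathcal{L}_{soft}+\mu\mathcal{L}_{reg}$, if and only if $(\theta^*,\psi^* )$ minimizes $\mathcal{L}_{total}$; i.e. the optimal parameters of S-MolSearch are exactly the solutions of this IOT problem.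
   Context: For $a,b\in\mathbb{R}^N_{>0}$: $U(a)=\{\Gamma\in\mathbb{R}^{N\times N}_{\ge 0}:\Gamma\mathbf 1_N=a\}$ and $U(a,b)=\{\Gamma\in\mathbb{R}^{N\times N}_{\ge 0}:\Gamma\mathbf 1_N=a,\ \Gamma^{\top}\mathbf 1_N=b\}$, where $\mathbf 1_N$ is the all-ones vector. $\langle A,B\rangle=\sum_{ij}A_{ij}B_{ij}$ and $\|\cdot\|_F$ is the Frobenius norm. $H(\Gamma)=-\sum_{i,j}\Gamma_{ij}(\log\Gamma_{ij}-1)$. The generalized KL divergence is $KL(X\|Y)=\sum_{i,j}\big(X_{ij}\log\frac{X_{ij}}{Y_{ij}}-X_{ij}+Y_{ij}\big)$ with $0\log 0=0$. $\delta_{ij}$ is the Kronecker delta. Positive pairs $(x_i,y_i)$ are embeddings of two molecules that are active on the same protein target; $\mathcal{L}_{reg}$ is the KoLeo regularizer (assume the $z_i$ are pairwise distinct so that it is finite). Minimizers of the loss functions over the parameter spaces are assumed to be understood as global minimizers (the equivalences hold including the case where the minimizer sets are empty). *)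

theory Defs
  imports "HOL-Analysis.Analysis"
begin

text \<open>Indices 1..N are modelled by a finite type 'n with N = CARD('n);
  N x N matrices are functions 'n => 'n => real.\<close>

definition xlogx :: "real \<Rightarrow> real" where
  "xlogx x = (if x = 0 then 0 else x * ln x)"

definition U1 :: "('n::finite \<Rightarrow> real) \<Rightarrow> ('n \<Rightarrow> 'n \<Rightarrow> real) set" where
  "U1 a = {G. (\<forall>i j. G i j \<ge> 0) \<and> (\<forall>i. (\<Sum>j\<in>UNIV. G i j) = a i)}"

definition U2 :: "('n::finite \<Rightarrow> real) \<Rightarrow> ('n \<Rightarrow> real) \<Rightarrow> ('n \<Rightarrow> 'n \<Rightarrow> real) set" where
  "U2 a b = {G. (\<forall>i j. G i j \<ge> 0) \<and> (\<forall>i. (\<Sum>j\<in>UNIV. G i j) = a i)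
                 \<and> (\<forall>j. (\<Sum>i\<in>UNIV. G i j) = b j)}"

definition ones :: "'n::finite \<Rightarrow> real" where "ones = (\<lambda>_. 1)"

definition unif :: "'n::finite \<Rightarrow> real" where "unif = (\<lambda>_. 1 / real CARD('n))"

definition frob_inner :: "('n::finite \<Rightarrow> 'n \<Rightarrow> real) \<Rightarrow> ('n \<Rightarrow> 'n \<Rightarrow> real) \<Rightarrow> real" where
  "frob_inner A B = (\<Sum>i\<in>UNIV. \<Sum>j\<in>UNIV. A i j * B i j)"

definition frob_norm :: "('n::finite \<Rightarrow> 'n \<Rightarrow> real) \<Rightarrow> real" where
  "frob_norm A = sqrt (frob_inner A A)"

definition entropy :: "('n::finite \<Rightarrow> 'n \<Rightarrow> real) \<Rightarrow> real" where
  "entropy G = - (\<Sum>i\<in>UNIV. \<Sum>j\<in>UNIV. xlogx (G i j) - G i j)"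

definition KL :: "('n::finite \<Rightarrow> 'n \<Rightarrow> real) \<Rightarrow> ('n \<Rightarrow> 'n \<Rightarrow> real) \<Rightarrow> real" where
  "KL X Y = (\<Sum>i\<in>UNIV. \<Sum>j\<in>UNIV.
      (if X i j = 0 then 0 else X i j * ln (X i j / Y i j)) - X i j + Y i j)"

definition is_argmin :: "('a \<Rightarrow> real) \<Rightarrow> 'a set \<Rightarrow> 'a \<Rightarrow> bool" where
  "is_argmin f S x \<longleftrightarrow> x \<in> S \<and> (\<forall>y\<in>S. f x \<le> f y)"

definition argmin :: "('a \<Rightarrow> real) \<Rightarrow> 'a set \<Rightarrow> 'a" where
  "argmin f S = (THE x. is_argmin f S x)"

definition is_minimizer :: "('a \<Rightarrow> real) \<Rightarrow> 'a \<Rightarrow> bool" where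
  "is_minimizer f x \<longleftrightarrow> (\<forall>y. f x \<le> f y)"

definition gram :: "('n \<Rightarrow> 'v::real_inner) \<Rightarrow> ('n \<Rightarrow> 'v) \<Rightarrow> 'n \<Rightarrow> 'n \<Rightarrow> real" where
  "gram a b i j = inner (a i) (b j)"

definition cost :: "real \<Rightarrow> ('n \<Rightarrow> 'n \<Rightarrow> real) \<Rightarrow> 'n \<Rightarrow> 'n \<Rightarrow> real" where
  "cost c s i j = c - s i j"

definition quad_obj :: "real \<Rightarrow> ('n::finite \<Rightarrow> 'n \<Rightarrow> real) \<Rightarrow> ('n \<Rightarrow> 'n \<Rightarrow> real) \<Rightarrow> real" where
  "quad_obj lam C G = frob_inner C G + lam / 2 * (frob_norm G)\<^sup>2"

definition ent_obj :: "real \<Rightarrow> ('n::finite \<Rightarrow> 'n \<Rightarrow> real) \<Rightarrow> ('n \<Rightarrow> 'n \<Rightarrow> real) \<Rightarrow> real" where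
  "ent_obj tau C G = frob_inner C G - tau * entropy G"

definition Gamma_hat :: "real \<Rightarrow> real \<Rightarrow> ('n::finite \<Rightarrow> 'v::real_inner) \<Rightarrow> 'n \<Rightarrow> 'n \<Rightarrow> real" where
  "Gamma_hat lam c u = argmin (quad_obj lam (cost c (gram u u))) (U2 ones ones)"

definition Gamma_ent :: "real \<Rightarrow> real \<Rightarrow> ('n::finite \<Rightarrow> 'n \<Rightarrow> real) \<Rightarrow> 'n \<Rightarrow> 'n \<Rightarrow> real" where
  "Gamma_ent tau c s = argmin (ent_obj tau (cost c s)) (U1 unif)"

definition Gamma_g :: "'n::finite \<Rightarrow> 'n \<Rightarrow> real" where
  "Gamma_g i j = (if i = j then 1 / real CARD('n) else 0)"

definition L_sup :: "real \<Rightarrow> ('n::finite \<Rightarrow> 'n \<Rightarrow> real) \<Rightarrow> real" where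
  "L_sup tau s = - (\<Sum>i\<in>UNIV. ln (exp (s i i / tau) / (\<Sum>j\<in>UNIV. exp (s i j / tau))))"

definition L_soft :: "real \<Rightarrow> ('n::finite \<Rightarrow> 'n \<Rightarrow> real) \<Rightarrow> ('n \<Rightarrow> 'n \<Rightarrow> real) \<Rightarrow> real" where
  "L_soft tau G s = - (\<Sum>i\<in>UNIV. \<Sum>j\<in>UNIV.
      G i j * ln (exp (s i j / tau) / (\<Sum>k\<in>UNIV. exp (s i k / tau))))"

definition rho :: "('n::finite \<Rightarrow> 'v::real_normed_vector) \<Rightarrow> 'n \<Rightarrow> real" where
  "rho z i = Min ((\<lambda>j. norm (z i - z j)) ` (UNIV - {i}))"

definition L_reg :: "('n::finite \<Rightarrow> 'v::real_normed_vector) \<Rightarrow> real" where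
  "L_reg z = - (1 / real CARD('n)) * (\<Sum>i\<in>UNIV. ln (rho z i))"

definition J_iot :: "real \<Rightarrow> real \<Rightarrow> real \<Rightarrow> real \<Rightarrow> ('n::finite \<Rightarrow> 'v::real_inner)
    \<Rightarrow> ('n \<Rightarrow> 'v) \<Rightarrow> ('n \<Rightarrow> 'v) \<Rightarrow> ('n \<Rightarrow> 'v) \<Rightarrow> real" where
  "J_iot tau lam mu c u x y z =
     KL Gamma_g (Gamma_ent tau c (gram x y))
   + KL (Gamma_hat lam c u) (Gamma_ent tau c (gram z z))
   + mu * L_reg z"

end

theory Submission
  imports Defs
begin

lemma quad_alt:
  "quad_obj lam C G = (\<Sum>i\<in>UNIV. \<Sum>j\<in>UNIV. C i j * G i j + lam/2 * (G i j)^2)"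
proof -
  have nn: "0 \<le> (\<Sum>i\<in>UNIV. \<Sum>j\<in>UNIV. G i j * G i j)"
    by (intro sum_nonneg) simp
  show ?thesis
    unfolding quad_obj_def frob_norm_def frob_inner_def
    using nn by (simp add: sum.distrib sum_distrib_left power2_eq_square)
qed

lemma quad_exists:
  fixes C :: "'n::finite \<Rightarrow> 'n \<Rightarrow> real"
  shows "\<exists>G. is_argmin (quad_obj lam C) (U2 ones ones) G"
proof -
  define S :: "(real^'n^'n) set" where "S = {M. (\<forall>i j. 0 \<le> M$i$j) \<and> (\<forall>i. (\<Sum>j\<in>UNIV. M$i$j) = 1)
       \<and> (\<forall>j. (\<Sum>i\<in>UNIV. M$i$j) = 1)}"
  define F where "F M = quad_obj lam C (\<lambda>i j. M$i$j)" for M :: "real^'n^'n"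
  have cl: "closed S" unfolding S_def
    by (intro closed_Collect_conj closed_Collect_all closed_Collect_le closed_Collect_eq continuous_intros)
  have bd: "bounded S" unfolding bounded_iff
  proof (intro exI ballI)
    fix M assume M: "M \<in> S"
    have "norm M \<le> (\<Sum>i\<in>UNIV. norm (M$i))"
      unfolding norm_vec_def by (rule L2_set_le_sum) simp
    also have "\<dots> \<le> (\<Sum>i\<in>UNIV. \<Sum>j\<in>UNIV. \<bar>M$i$j\<bar>)"
      by (intro sum_mono norm_le_l1_cart)
    also have "\<dots> = (\<Sum>i::'n\<in>UNIV. (1::real))"
      using M unfolding S_def by (simp)
    finally show "norm M \<le> real CARD('n)" by simp
  qed
  have cp: "compact S" using cl bd by (simp add: compact_eq_bounded_closed)
  have ne: "(\<chi> i j. if i = j then 1 else 0) \<in> S"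
    unfolding S_def by auto
  have ct: "continuous_on S F"
    unfolding F_def quad_alt by (intro continuous_intros)
  obtain M where M: "M \<in> S" "\<And>M'. M' \<in> S \<Longrightarrow> F M \<le> F M'"
    using continuous_attains_inf[OF cp _ ct] ne by blast
  have "is_argmin (quad_obj lam C) (U2 ones ones) (\<lambda>i j. M$i$j)"
    unfolding is_argmin_def
  proof (intro conjI ballI)
    show "(\<lambda>i j. M $ i $ j) \<in> U2 ones ones" using M(1) unfolding S_def U2_def ones_def by auto
  next
    fix G :: "'n \<Rightarrow> 'n \<Rightarrow> real" assume G: "G \<in> U2 ones ones"
    have "(\<chi> i j. G i j) \<in> S" using G unfolding S_def U2_def ones_def by auto
    moreover have "(\<lambda>i j. (\<chi> i j. G i j) $ i $ j) = G" by simp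
    ultimately show "quad_obj lam C (\<lambda>i j. M $ i $ j) \<le> quad_obj lam C G"
      using M(2) unfolding F_def by metis
  qed
  then show ?thesis by blast
qed

lemma avg_sum:
  "(\<Sum>x\<in>A. (a x + b x)/2 - k * d x) = (sum a A + sum b A)/2 - k * sum d A" for k :: real
  by (simp add: sum_subtractf sum.distrib sum_divide_distrib[symmetric] sum_distrib_left)

lemma aux_lin: "a = (b + c)/2 - x \<Longrightarrow> b \<le> a \<Longrightarrow> c \<le> a \<Longrightarrow> x \<le> (0::real)"
proof -
  assume "a = (b + c)/2 - x" "b \<le> a" "c \<le> a"
  then have "2*a = b + c - 2*x" by (simp add: field_simps)
  with \<open>b \<le> a\<close> \<open>c \<le> a\<close> show ?thesis by linarith
qed

lemma quad_unique:
  fixes C :: "'n::finite \<Rightarrow> 'n \<Rightarrow> real"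
  assumes lam: "lam > 0"
    and G1: "is_argmin (quad_obj lam C) (U2 ones ones) G1"
    and G2: "is_argmin (quad_obj lam C) (U2 ones ones) G2"
  shows "G1 = G2"
proof -
  define H where "H i j = (G1 i j + G2 i j) / 2" for i j
  have H: "H \<in> U2 ones ones" using G1 G2
    unfolding is_argmin_def U2_def ones_def H_def
    by (auto simp: sum_divide_distrib[symmetric] sum.distrib)
  have pt: "C i j * H i j + lam/2 * (H i j)^2 =
      ((C i j * G1 i j + lam/2 * (G1 i j)^2) + (C i j * G2 i j + lam/2 * (G2 i j)^2))/2
      - lam/8 * (G1 i j - G2 i j)^2" for i j
    unfolding H_def by (simp add: power2_eq_square field_simps)
  have "quad_obj lam C H = (quad_obj lam C G1 + quad_obj lam C G2)/2
        - lam/8 * (\<Sum>i\<in>UNIV. \<Sum>j\<in>UNIV. (G1 i j - G2 i j)^2)" (is "_ = _ - ?X")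
    unfolding quad_alt pt by (simp only: avg_sum)
  moreover have "quad_obj lam C G1 \<le> quad_obj lam C H" "quad_obj lam C G2 \<le> quad_obj lam C H"
    using G1 G2 H unfolding is_argmin_def by auto
  ultimately have "?X \<le> 0" by (rule aux_lin)
  hence le: "(\<Sum>i\<in>UNIV. \<Sum>j\<in>UNIV. (G1 i j - G2 i j)^2) \<le> 0" using lam
    by (simp add: mult_le_0_iff)
  have nn: "0 \<le> (\<Sum>i\<in>UNIV. \<Sum>j\<in>UNIV. (G1 i j - G2 i j)^2)"
    by (intro sum_nonneg) simp
  have "(\<Sum>i\<in>UNIV. \<Sum>j\<in>UNIV. (G1 i j - G2 i j)^2) = 0" using nn le by linarith
  hence "\<forall>i\<in>UNIV. (\<Sum>j\<in>UNIV. (G1 i j - G2 i j)^2) = 0"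
    by (subst (asm) sum_nonneg_eq_0_iff) (auto intro: sum_nonneg)
  hence "\<forall>i j. (G1 i j - G2 i j)^2 = 0"
    by (simp add: sum_nonneg_eq_0_iff)
  thus ?thesis by (auto intro!: ext)
qed


definition Dfun :: "real \<Rightarrow> real \<Rightarrow> real" where
  "Dfun x y = xlogx x - x * ln y - x + y"

lemma D_nonneg_zero:
  assumes x: "0 \<le> x" and y: "0 < y"
  shows "0 \<le> Dfun x y" and "Dfun x y = 0 \<Longrightarrow> x = y"
proof -
  have "0 \<le> Dfun x y \<and> (Dfun x y = 0 \<longrightarrow> x = y)"
  proof (cases "x = 0")
    case True thus ?thesis using y by (simp add: Dfun_def xlogx_def)
  next
    case False
    hence xp: "0 < x" using x by simp
    have t: "0 < y / x" using xp y by simp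
    have lnq: "ln (y / x) = ln y - ln x" using xp y by (simp add: ln_div)
    have D: "Dfun x y = y - x - x * ln (y / x)"
      using False unfolding Dfun_def xlogx_def lnq by (simp add: algebra_simps)
    have le: "ln (y / x) \<le> y / x - 1" by (rule ln_le_minus_one[OF t])
    have "x * ln (y / x) \<le> x * (y / x - 1)" using le xp by (simp add: mult_left_mono)
    also have "\<dots> = y - x" using xp by (simp add: field_simps)
    finally have 1: "0 \<le> Dfun x y" using D by linarith
    have 2: "x = y" if "Dfun x y = 0"
    proof -
      have e1: "x * ln (y / x) = y - x" using that D by linarith
      have e2: "x * (y / x - 1) = y - x" using xp by (simp add: field_simps)
      have "x * ln (y / x) = x * (y / x - 1)" using e1 e2 by simp
      hence "ln (y / x) = y / x - 1" using xp by simp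
      hence "y / x = 1" by (rule ln_eq_minus_one[OF t])
      thus ?thesis using xp by (simp add: field_simps)
    qed
    show ?thesis using 1 2 by blast
  qed
  thus "0 \<le> Dfun x y" and "Dfun x y = 0 \<Longrightarrow> x = y" by auto
qed

definition gibbs :: "real \<Rightarrow> ('n::finite \<Rightarrow> 'n \<Rightarrow> real) \<Rightarrow> 'n \<Rightarrow> 'n \<Rightarrow> real" where
  "gibbs tau s i j = exp (s i j / tau) / (real CARD('n) * (\<Sum>k\<in>UNIV. exp (s i k / tau)))"

lemma Z_pos: "0 < (\<Sum>k\<in>(UNIV::'n::finite set). exp (f k :: real))"
  by (rule sum_pos) auto

lemma gibbs_pos: "0 < gibbs tau s i j"
  unfolding gibbs_def by (intro divide_pos_pos mult_pos_pos Z_pos) auto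

lemma gibbs_rowsum: "(\<Sum>j\<in>UNIV. gibbs tau (s::'n::finite \<Rightarrow> _) i j) = 1 / real CARD('n)"
proof -
  have Z: "(\<Sum>k\<in>UNIV. exp (s i k / tau)) \<noteq> 0" using Z_pos[of "\<lambda>k. s i k / tau"] by simp
  show ?thesis unfolding gibbs_def sum_divide_distrib[symmetric] using Z by simp
qed

lemma gibbs_U1: "gibbs tau s \<in> U1 unif"
  unfolding U1_def unif_def by (simp add: gibbs_rowsum less_imp_le[OF gibbs_pos])

lemma ln_gibbs:
  fixes s :: "'n::finite \<Rightarrow> 'n \<Rightarrow> real"
  shows "ln (gibbs tau s i j) = s i j / tau - ln (real (CARD('n)))
     - ln (\<Sum>k\<in>UNIV. exp (s i k / tau))"
proof -
  have Z: "0 < (\<Sum>k\<in>UNIV. exp (s i k / tau))" by (rule Z_pos)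
  have N: "0 < real CARD('n)" by simp
  show ?thesis unfolding gibbs_def using Z N by (simp add: ln_div ln_mult)
qed

lemma ent_decomp:
  fixes s :: "'n::finite \<Rightarrow> 'n \<Rightarrow> real"
  assumes tau: "tau > 0" and G: "G \<in> U1 unif"
  shows "ent_obj tau (cost c s) G = tau * (\<Sum>i\<in>UNIV. \<Sum>j\<in>UNIV. Dfun (G i j) (gibbs tau s i j))
     + (\<Sum>i\<in>UNIV. (c - tau * ln (real CARD('n)) - tau * ln (\<Sum>k\<in>UNIV. exp (s i k / tau))) / real CARD('n))
     - tau"
proof -
  define a where "a i = c - tau * ln (real CARD('n)) - tau * ln (\<Sum>k\<in>UNIV. exp (s i k / tau))" for i
  define N where "N = real CARD('n)"
  have pt: "cost c s i j * G i j + tau * (xlogx (G i j) - G i j)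
     = tau * Dfun (G i j) (gibbs tau s i j) + a i * G i j - tau * gibbs tau s i j" for i j
  proof -
    have "tau * (G i j * (s i j / tau)) = G i j * s i j" using tau by simp
    thus ?thesis unfolding Dfun_def ln_gibbs cost_def a_def by (simp add: algebra_simps)
  qed
  have "ent_obj tau (cost c s) G = (\<Sum>i\<in>UNIV. \<Sum>j\<in>UNIV. cost c s i j * G i j + tau * (xlogx (G i j) - G i j))"
    unfolding ent_obj_def frob_inner_def entropy_def
    by (simp add: sum.distrib sum_distrib_left)
  also have "\<dots> = (\<Sum>i\<in>UNIV. \<Sum>j\<in>UNIV. tau * Dfun (G i j) (gibbs tau s i j) + a i * G i j - tau * gibbs tau s i j)"
    unfolding pt ..
  also have "\<dots> = (\<Sum>i\<in>UNIV. tau * (\<Sum>j\<in>UNIV. Dfun (G i j) (gibbs tau s i j)) + a i * (\<Sum>j\<in>UNIV. G i j)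
        - tau * (\<Sum>j\<in>UNIV. gibbs tau s i j))"
    by (simp add: sum.distrib sum_subtractf sum_distrib_left)
  also have "\<dots> = (\<Sum>i\<in>UNIV. tau * (\<Sum>j\<in>UNIV. Dfun (G i j) (gibbs tau s i j)) + a i / N - tau / N)"
    using G unfolding U1_def unif_def gibbs_rowsum N_def by simp
  also have "\<dots> = tau * (\<Sum>i\<in>UNIV. \<Sum>j\<in>UNIV. Dfun (G i j) (gibbs tau s i j)) + (\<Sum>i\<in>UNIV. a i / N) - tau"
    by (simp add: sum.distrib sum_subtractf sum_distrib_left N_def)
  finally show ?thesis unfolding a_def N_def .
qed

lemma ent_argmin:
  fixes s :: "'n::finite \<Rightarrow> 'n \<Rightarrow> real"
  assumes tau: "tau > 0"
  shows "is_argmin (ent_obj tau (cost c s)) (U1 unif) (gibbs tau s)"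
    and "is_argmin (ent_obj tau (cost c s)) (U1 unif) G \<Longrightarrow> G = gibbs tau s"
proof -
  define B where "B = (\<Sum>i\<in>UNIV. (c - tau * ln (real CARD('n)) - tau * ln (\<Sum>k\<in>UNIV. exp (s i k / tau))) / real CARD('n))"
  have D0: "Dfun (gibbs tau s i j) (gibbs tau s i j) = 0" for i j
  proof -
    have "0 < gibbs tau s i j" by (rule gibbs_pos)
    thus ?thesis unfolding Dfun_def xlogx_def by simp
  qed
  have vGs: "ent_obj tau (cost c s) (gibbs tau s) = B - tau"
    using ent_decomp[where s=s and c=c and G="gibbs tau s", OF tau gibbs_U1] unfolding B_def D0 by simp
  have Dnn: "0 \<le> Dfun (G i j) (gibbs tau s i j)" if G: "G \<in> U1 unif" for G i j
  proof -
    have "0 \<le> G i j" using G unfolding U1_def by blast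
    thus ?thesis by (rule D_nonneg_zero(1)[OF _ gibbs_pos])
  qed
  have ge: "B - tau \<le> ent_obj tau (cost c s) G" if G: "G \<in> U1 unif" for G
  proof -
    have "0 \<le> (\<Sum>i\<in>UNIV. \<Sum>j\<in>UNIV. Dfun (G i j) (gibbs tau s i j))"
      by (intro sum_nonneg Dnn[OF G])
    hence "0 \<le> tau * (\<Sum>i\<in>UNIV. \<Sum>j\<in>UNIV. Dfun (G i j) (gibbs tau s i j))" using tau by simp
    thus ?thesis using ent_decomp[where s=s and c=c, OF tau G] unfolding B_def by linarith
  qed
  show "is_argmin (ent_obj tau (cost c s)) (U1 unif) (gibbs tau s)"
    unfolding is_argmin_def using gibbs_U1 ge vGs by auto
  assume A: "is_argmin (ent_obj tau (cost c s)) (U1 unif) G"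
  hence G: "G \<in> U1 unif" and le: "ent_obj tau (cost c s) G \<le> B - tau"
    using gibbs_U1[of tau s] vGs unfolding is_argmin_def by auto
  have "tau * (\<Sum>i\<in>UNIV. \<Sum>j\<in>UNIV. Dfun (G i j) (gibbs tau s i j)) \<le> 0"
    using le ent_decomp[where s=s and c=c, OF tau G] unfolding B_def by linarith
  hence le0: "(\<Sum>i\<in>UNIV. \<Sum>j\<in>UNIV. Dfun (G i j) (gibbs tau s i j)) \<le> 0"
    using tau by (simp add: mult_le_0_iff)
  have nn: "0 \<le> (\<Sum>i\<in>UNIV. \<Sum>j\<in>UNIV. Dfun (G i j) (gibbs tau s i j))"
    by (intro sum_nonneg Dnn[OF G])
  have "(\<Sum>i\<in>UNIV. \<Sum>j\<in>UNIV. Dfun (G i j) (gibbs tau s i j)) = 0" using nn le0 by linarith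
  hence r: "\<forall>i\<in>UNIV. (\<Sum>j\<in>UNIV. Dfun (G i j) (gibbs tau s i j)) = 0"
    by (subst (asm) sum_nonneg_eq_0_iff) (auto intro!: sum_nonneg Dnn[OF G])
  have z: "Dfun (G i j) (gibbs tau s i j) = 0" for i j
  proof -
    have "(\<Sum>j\<in>UNIV. Dfun (G i j) (gibbs tau s i j)) = 0" using r by blast
    thus ?thesis by (subst (asm) sum_nonneg_eq_0_iff) (auto intro!: Dnn[OF G])
  qed
  show "G = gibbs tau s"
  proof (intro ext)
    fix i j
    have "0 \<le> G i j" using G unfolding U1_def by blast
    from D_nonneg_zero(2)[OF this gibbs_pos z] show "G i j = gibbs tau s i j" .
  qed
qed

lemma Gamma_ent_eq:
  fixes s :: "'n::finite \<Rightarrow> 'n \<Rightarrow> real"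
  assumes tau: "tau > 0"
  shows "Gamma_ent tau c s = gibbs tau s"
proof -
  have ex: "\<exists>!G. is_argmin (ent_obj tau (cost c s)) (U1 unif) G"
    using ent_argmin[OF tau, of c s] by blast
  show ?thesis unfolding Gamma_ent_def argmin_def
    apply (rule the1_equality[OF ex])
    using ent_argmin(1)[OF tau] by blast
qed


lemma gibbs_sm:
  fixes s :: "'n::finite \<Rightarrow> 'n \<Rightarrow> real"
  shows "gibbs tau s i j = (exp (s i j / tau) / (\<Sum>k\<in>UNIV. exp (s i k / tau))) / real CARD('n)"
  unfolding gibbs_def by (simp add: field_simps)

lemma sm_pos:
  fixes s :: "'n::finite \<Rightarrow> 'n \<Rightarrow> real"
  shows "0 < exp (s i j / tau) / (\<Sum>k\<in>UNIV. exp (s i k / tau))"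
  using Z_pos[of "\<lambda>k. s i k / tau"] by (simp add: divide_pos_pos)

lemma gibbs_total: "(\<Sum>i\<in>UNIV. \<Sum>j\<in>UNIV. gibbs tau (s::'n::finite \<Rightarrow> _) i j) = 1"
  by (simp add: gibbs_rowsum)

lemma KL1:
  fixes s :: "'n::finite \<Rightarrow> 'n \<Rightarrow> real"
  shows "KL Gamma_g (gibbs tau s) = (1 / real CARD('n)) * L_sup tau s"
proof -
  define N where "N = real CARD('n)"
  have N: "0 < N" unfolding N_def by simp
  define q where "q i = exp (s i i / tau) / (\<Sum>k\<in>UNIV. exp (s i k / tau))" for i
  have qp: "0 < q i" for i unfolding q_def by (rule sm_pos)
  have t1: "(if Gamma_g i j = 0 then 0 else Gamma_g i j * ln (Gamma_g i j / gibbs tau s i j))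
      = (if j = i then - (1/N) * ln (q i) else 0)" for i j
  proof (cases "j = i")
    case True
    have "gibbs tau s i i = q i / N" unfolding gibbs_sm q_def N_def ..
    hence "Gamma_g i i / gibbs tau s i i = 1 / q i" using N qp[of i]
      unfolding Gamma_g_def N_def by simp
    moreover have "ln (1 / q i) = - ln (q i)" using qp[of i] by (simp add: ln_div)
    ultimately show ?thesis using True N unfolding Gamma_g_def N_def by simp
  next
    case False thus ?thesis unfolding Gamma_g_def by auto
  qed
  have t2: "Gamma_g i j = (if j = i then 1/N else 0)" for i j :: 'n
    unfolding Gamma_g_def N_def by auto
  have "KL Gamma_g (gibbs tau s) = (\<Sum>i\<in>UNIV. \<Sum>j\<in>UNIV.
        (if j = i then - (1/N) * ln (q i) else 0) - (if j = i then 1/N else 0) + gibbs tau s i j)"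
    unfolding KL_def t1 t2[symmetric] ..
  also have "\<dots> = (\<Sum>i\<in>UNIV. - (1/N) * ln (q i)) - (\<Sum>i::'n\<in>UNIV. 1/N)
        + (\<Sum>i\<in>UNIV. \<Sum>j\<in>UNIV. gibbs tau s i j)"
    by (simp add: sum.distrib sum_subtractf)
  also have "\<dots> = (1/N) * L_sup tau s"
    using N unfolding gibbs_total L_sup_def q_def N_def
    by (simp add: sum_distrib_left sum_negf)
  finally show ?thesis unfolding N_def .
qed

lemma KL2:
  fixes s :: "'n::finite \<Rightarrow> 'n \<Rightarrow> real"
  assumes G: "G \<in> U2 ones ones"
  shows "KL G (gibbs tau s) = (\<Sum>i\<in>UNIV. \<Sum>j\<in>UNIV. xlogx (G i j))
     + real CARD('n) * ln (real CARD('n)) - real CARD('n) + 1 + L_soft tau G s"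
proof -
  define N where "N = real CARD('n)"
  have N: "0 < N" unfolding N_def by simp
  define q where "q i j = exp (s i j / tau) / (\<Sum>k\<in>UNIV. exp (s i k / tau))" for i j
  have qp: "0 < q i j" for i j unfolding q_def by (rule sm_pos)
  have Gnn: "0 \<le> G i j" for i j using G unfolding U2_def by blast
  have Grow: "(\<Sum>j\<in>UNIV. G i j) = 1" for i using G unfolding U2_def ones_def by blast
  have t1: "(if G i j = 0 then 0 else G i j * ln (G i j / gibbs tau s i j))
      = xlogx (G i j) + G i j * ln N - G i j * ln (q i j)" for i j
  proof (cases "G i j = 0")
    case True thus ?thesis unfolding xlogx_def by simp
  next
    case False
    hence gp: "0 < G i j" using Gnn[of i j] by simp
    have "gibbs tau s i j = q i j / N" unfolding gibbs_sm q_def N_def ..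
    hence e: "ln (G i j / gibbs tau s i j) = ln (G i j) + ln N - ln (q i j)"
      using gp N qp[of i j] by (simp add: ln_div ln_mult)
    show ?thesis using False unfolding xlogx_def e by (simp add: algebra_simps)
  qed
  have "KL G (gibbs tau s) = (\<Sum>i\<in>UNIV. \<Sum>j\<in>UNIV.
        xlogx (G i j) + G i j * ln N - G i j * ln (q i j) - G i j + gibbs tau s i j)"
    unfolding KL_def t1 ..
  also have "\<dots> = (\<Sum>i\<in>UNIV. \<Sum>j\<in>UNIV. xlogx (G i j)) + (\<Sum>i\<in>UNIV. (\<Sum>j\<in>UNIV. G i j) * ln N)
       - (\<Sum>i\<in>UNIV. \<Sum>j\<in>UNIV. G i j * ln (q i j)) - (\<Sum>i\<in>UNIV. \<Sum>j\<in>UNIV. G i j)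
       + (\<Sum>i\<in>UNIV. \<Sum>j\<in>UNIV. gibbs tau s i j)"
    by (simp add: sum.distrib sum_subtractf sum_distrib_right)
  also have "\<dots> = (\<Sum>i\<in>UNIV. \<Sum>j\<in>UNIV. xlogx (G i j)) + N * ln N - N + 1 + L_soft tau G s"
    unfolding gibbs_total Grow L_soft_def q_def N_def by simp
  finally show ?thesis unfolding N_def .
qed

lemma sep_min:
  assumes "\<And>a b. h (a, b) = f a + (g b :: real)"
  shows "is_minimizer h (x, y) \<longleftrightarrow> is_minimizer f x \<and> is_minimizer g y"
  unfolding is_minimizer_def
proof safe
  fix a assume H: "\<forall>p. h (x, y) \<le> h p"
  from H[rule_format, of "(a, y)"] show "f x \<le> f a" using assms by simp
next
  fix b assume H: "\<forall>p. h (x, y) \<le> h p"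
  from H[rule_format, of "(x, b)"] show "g y \<le> g b" using assms by simp
next
  fix p assume "\<forall>a. f x \<le> f a" "\<forall>b. g y \<le> g b"
  thus "h (x, y) \<le> h p" using assms by (cases p) (simp add: add_mono)
qed

lemma min_scale:
  assumes "k > 0"
  shows "is_minimizer (\<lambda>x. k * f x + (d::real)) x \<longleftrightarrow> is_minimizer f x"
  unfolding is_minimizer_def using assms by simp

lemma min_shift:
  shows "is_minimizer (\<lambda>x. f x + (d::real)) x \<longleftrightarrow> is_minimizer f x"
  unfolding is_minimizer_def by simp


lemma min_scale0:
  assumes "k > 0"
  shows "is_minimizer (\<lambda>x. k * (f x::real)) x \<longleftrightarrow> is_minimizer f x"
  unfolding is_minimizer_def using assms by simp

theorem proposition2:
  fixes X Y :: "'p \<Rightarrow> 'n::finite \<Rightarrow> 'v::real_inner"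
    and Z :: "'q \<Rightarrow> 'n \<Rightarrow> 'v"
    and u :: "'n \<Rightarrow> 'v"
    and tau lam mu c :: real
  assumes N2: "CARD('n) \<ge> 2"
    and tau: "tau > 0" and lam: "lam > 0" and mu: "mu \<ge> 0"
    and unitX: "\<And>\<theta> i. norm (X \<theta> i) = 1"
    and unitY: "\<And>\<theta> i. norm (Y \<theta> i) = 1"
    and unitZ: "\<And>\<psi> i. norm (Z \<psi> i) = 1"
    and unitu: "\<And>i. norm (u i) = 1"
    and distinctZ: "\<And>\<psi>. inj (Z \<psi>)"
  defines "J \<equiv> (\<lambda>(\<theta>, \<psi>). J_iot tau lam mu c u (X \<theta>) (Y \<theta>) (Z \<psi>))"
    and "Lsup \<equiv> (\<lambda>\<theta>. L_sup tau (gram (X \<theta>) (Y \<theta>)))"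
    and "Lsoft \<equiv> (\<lambda>\<psi>. L_soft tau (Gamma_hat lam c u) (gram (Z \<psi>) (Z \<psi>)))"
    and "Lreg \<equiv> (\<lambda>\<psi>. L_reg (Z \<psi>))"
    and "K \<equiv> (\<Sum>i\<in>UNIV. \<Sum>j\<in>UNIV. xlogx (Gamma_hat lam c u i j))
             + real CARD('n) * ln (real CARD('n)) - real CARD('n) + 1"
  shows "(\<exists>!G. is_argmin (quad_obj lam (cost c (gram u u))) (U2 ones ones) G)
    \<and> (\<forall>\<theta>. \<exists>!G. is_argmin (ent_obj tau (cost c (gram (X \<theta>) (Y \<theta>)))) (U1 unif) G)
    \<and> (\<forall>\<psi>. \<exists>!G. is_argmin (ent_obj tau (cost c (gram (Z \<psi>) (Z \<psi>)))) (U1 unif) G)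
    \<and> (\<forall>\<theta> \<psi>. J (\<theta>, \<psi>) = (1 / real CARD('n)) * Lsup \<theta> + Lsoft \<psi> + mu * Lreg \<psi> + K)
    \<and> (\<forall>\<theta>s \<psi>s.
         (is_minimizer J (\<theta>s, \<psi>s) \<longleftrightarrow>
            is_minimizer Lsup \<theta>s \<and> is_minimizer (\<lambda>\<psi>. Lsoft \<psi> + mu * Lreg \<psi>) \<psi>s)
       \<and> (is_minimizer J (\<theta>s, \<psi>s) \<longleftrightarrow>
            is_minimizer (\<lambda>(\<theta>, \<psi>). Lsup \<theta> + Lsoft \<psi> + mu * Lreg \<psi>) (\<theta>s, \<psi>s)))"
  proof -
  define N where "N = real CARD('n)"
  have Npos: "0 < N" unfolding N_def by simp
  have ex1_hat: "\<exists>!G. is_argmin (quad_obj lam (cost c (gram u u))) (U2 ones ones) G"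
    using quad_exists[of lam "cost c (gram u u)"] quad_unique[OF lam] by blast
  have Ghat: "is_argmin (quad_obj lam (cost c (gram u u))) (U2 ones ones) (Gamma_hat lam c u)"
    unfolding Gamma_hat_def argmin_def by (rule theI'[OF ex1_hat])
  hence GhU2: "Gamma_hat lam c u \<in> U2 ones ones" unfolding is_argmin_def by blast
  have ex1_ent: "\<exists>!G. is_argmin (ent_obj tau (cost c s)) (U1 unif) G" for s :: "'n \<Rightarrow> 'n \<Rightarrow> real"
    using ent_argmin[OF tau, of c s] by blast
  have Jeq: "J (\<theta>, \<psi>) = (1 / real CARD('n)) * Lsup \<theta> + Lsoft \<psi> + mu * Lreg \<psi> + K" for \<theta> \<psi>
    unfolding J_def J_iot_def Gamma_ent_eq[OF tau] KL1 KL2[OF GhU2] Lsup_def Lsoft_def Lreg_def K_def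
    by simp
  have sepJ: "is_minimizer J (\<theta>s, \<psi>s) \<longleftrightarrow>
            is_minimizer Lsup \<theta>s \<and> is_minimizer (\<lambda>\<psi>. Lsoft \<psi> + mu * Lreg \<psi>) \<psi>s" for \<theta>s \<psi>s
  proof -
    have "is_minimizer J (\<theta>s, \<psi>s) \<longleftrightarrow> is_minimizer (\<lambda>a. (1 / real CARD('n)) * Lsup a) \<theta>s
         \<and> is_minimizer (\<lambda>b. (Lsoft b + mu * Lreg b) + K) \<psi>s"
      by (rule sep_min) (simp add: Jeq algebra_simps)
    also have "\<dots> \<longleftrightarrow> is_minimizer Lsup \<theta>s \<and> is_minimizer (\<lambda>\<psi>. Lsoft \<psi> + mu * Lreg \<psi>) \<psi>s"
      using min_scale0[of "1 / real CARD('n)" Lsup] min_shift[of "\<lambda>b. Lsoft b + mu * Lreg b" K]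
      by simp
    finally show ?thesis .
  qed
  have sepT: "is_minimizer (\<lambda>(\<theta>, \<psi>). Lsup \<theta> + Lsoft \<psi> + mu * Lreg \<psi>) (\<theta>s, \<psi>s) \<longleftrightarrow>
            is_minimizer Lsup \<theta>s \<and> is_minimizer (\<lambda>\<psi>. Lsoft \<psi> + mu * Lreg \<psi>) \<psi>s" for \<theta>s \<psi>s
    by (rule sep_min) (simp add: algebra_simps)
  show ?thesis using ex1_hat ex1_ent Jeq sepJ sepT by auto
qed

end
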